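(* Let $N\geq1$, $k\in\{1,\dots,N\}$ and for $i\in\{1,\dots,N\}$ let \[ v_i=\left(1-\frac{i-1}{N}\right)^k-\left(1-\frac{i}{N}\right)^k. \] Then for all integers $d\geq1$, \[ \sum_{i=1}^N v_i\left(\frac{i}{N+1}\right)^{1/d}\leq 2e\,k^{-1/d}. \] *)

theory Defs
  imports Complex_Main
begin

end

theory Submission
  imports Defs
begin

lemma bern_aux: "(x::real) \<ge> 0 \<Longrightarrow> x^n * (real n + 1) + x^(n+1) \<le> (x+1)^(n+1)"
proof (induction n)
  case 0 then show ?case by simp
next
  case (Suc n)
  have "(x+1)^(Suc n + 1) = (x+1) * (x+1)^(n+1)" by simp
  also have "\<dots> \<ge> (x+1) * (x^n * (real n + 1) + x^(n+1))"
    using Suc by (intro mult_left_mono) auto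
  finally have h: "(x+1) * (x^n * (real n + 1) + x^(n+1)) \<le> (x+1)^(Suc n + 1)" .
  have "x^(Suc n) * (real (Suc n) + 1) + x^(Suc n + 1) \<le> (x+1) * (x^n * (real n + 1) + x^(n+1))"
    using Suc.prems by (simp add: algebra_simps)
  then show ?case using h by linarith
qed

lemma sum_pow_bound: "(\<Sum>m<n. (real m)^k) \<le> (real n)^(k+1) / (real k + 1)"
proof (induction n)
  case 0 then show ?case by simp
next
  case (Suc n)
  have b: "(real n)^k * (real k + 1) + (real n)^(k+1) \<le> (real n + 1)^(k+1)"
    using bern_aux[of "real n" k] by simp
  have "(\<Sum>m<Suc n. (real m)^k) = (\<Sum>m<n. (real m)^k) + (real n)^k" by simp
  also have "\<dots> \<le> (real n)^(k+1) / (real k + 1) + (real n)^k" using Suc by simp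
  also have "\<dots> = ((real n)^(k+1) + (real n)^k * (real k + 1)) / (real k + 1)"
    by (simp add: field_simps)
  also have "\<dots> \<le> (real n + 1)^(k+1) / (real k + 1)"
    using b by (intro divide_right_mono) auto
  finally show ?case by (simp add: add.commute)
qed

lemma sum_pow_bound2: "k \<ge> 1 \<Longrightarrow> (\<Sum>m=1..n. (real m)^k) \<le> (real n)^(k+1) / (real k + 1) + (real n)^k"
proof -
  assume k: "k \<ge> 1"
  have "(\<Sum>m=1..n. (real m)^k) = (\<Sum>m<Suc n. (real m)^k)"
  proof -
    have "{..<Suc n} = insert 0 {1..n}" by auto
    then show ?thesis using k by simp
  qed
  also have "\<dots> = (\<Sum>m<n. (real m)^k) + (real n)^k" by simp
  also have "\<dots> \<le> (real n)^(k+1) / (real k + 1) + (real n)^k" using sum_pow_bound by simp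
  finally show ?thesis .
qed

lemma sbp: "(\<Sum>i=1..(n::nat). real i * (a i - a (i+1))) = (\<Sum>i=1..n. a i) - real n * a (n+1)"
  by (induction n) (auto simp: algebra_simps)

lemma tele: "(\<Sum>i=1..(n::nat). (a i - a (i+1))) = a 1 - (a (n+1) :: real)"
  by (induction n) auto

lemma pw: "(y::real) \<ge> 0 \<Longrightarrow> 0 < p \<Longrightarrow> p \<le> 1 \<Longrightarrow> y powr p \<le> 1 + y"
proof (cases "y \<le> 1")
  case True
  assume "y \<ge> 0" "0 < p" "p \<le> 1"
  then have "y powr p \<le> 1" using True using powr_mono2[of p y 1] by simp
  then show ?thesis using \<open>y \<ge> 0\<close> by linarith
next
  case False
  assume "y \<ge> 0" "0 < p" "p \<le> 1"
  then have "y powr p \<le> y powr 1" using False by (intro powr_mono) auto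
  then show ?thesis using False by simp
qed

theorem lemma3p2:
  fixes N k d :: nat and v :: "nat \<Rightarrow> real"
  assumes "N \<ge> 1" and "1 \<le> k" and "k \<le> N"
    and "\<And>i. v i = (1 - (real i - 1) / real N) ^ k - (1 - real i / real N) ^ k"
    and "d \<ge> 1"
  shows "(\<Sum>i=1..N. v i * (real i / real (N + 1)) powr (1 / real d))
           \<le> 2 * exp 1 * real k powr (- 1 / real d)"
proof -
  define a where "a i = (1 - (real i - 1) / real N) ^ k" for i
  define p where "p = 1 / real d"
  define c where "c = real k powr (- 1 / real d)"
  have p: "0 < p" "p \<le> 1" using assms(5) by (auto simp: p_def)
  have c: "c > 0" using assms(2) by (simp add: c_def)
  have va: "v i = a i - a (i+1)" for i
    using assms(4)[of i] by (simp add: a_def add_divide_distrib)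
  have aN: "a (N+1) = 0" using assms(1,2) by (simp add: a_def)
  have a1: "a 1 = 1" by (simp add: a_def)
  have vnn: "v i \<ge> 0" if "i \<in> {1..N}" for i
  proof -
    have "1 - real i / real N \<ge> 0" using that assms(1) by (auto simp: field_simps)
    moreover have "1 - real i / real N \<le> 1 - (real i - 1) / real N"
      using assms(1) by (simp add: divide_right_mono)
    ultimately show ?thesis using assms(4)[of i] by (simp add: power_mono)
  qed
  have kp: "real k powr p * c = 1"
    using assms(2) by (simp add: c_def p_def powr_add[symmetric])
  have point: "(real i / real (N + 1)) powr p \<le> c * (1 + real k * (real i / real (N+1)))" for i
  proof -
    define x where "x = real i / real (N+1)"
    have x0: "x \<ge> 0" by (simp add: x_def)
    have "(real k * x) powr p = real k powr p * x powr p"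
      using x0 by (simp add: powr_mult)
    hence "c * (real k * x) powr p = x powr p" using kp by (simp add: algebra_simps)
    moreover have "(real k * x) powr p \<le> 1 + real k * x" using pw[OF _ p] x0 by simp
    ultimately have "x powr p \<le> c * (1 + real k * x)" using c
      by (metis mult_left_mono less_imp_le)
    then show ?thesis by (simp add: x_def)
  qed
  have S1: "(\<Sum>i=1..N. v i) = 1" using tele[of a N] aN a1 by (simp add: va)
  have S2: "(\<Sum>i=1..N. real i * v i) = (\<Sum>i=1..N. a i)"
    using sbp[of a N] aN by (simp add: va)
  have S3: "(\<Sum>i=1..N. a i) = (\<Sum>i=1..N. (real i)^k) / (real N)^k"
  proof -
    have "(\<Sum>i=1..N. a i) = (\<Sum>i=1..N. a (N + 1 - i))"
      using sum.atLeastAtMost_rev[of a 1 N] by simp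
    also have "\<dots> = (\<Sum>i=1..N. (real i)^k / (real N)^k)"
    proof (rule sum.cong)
      fix i assume i: "i \<in> {1..N}"
      have "1 - (real (N + 1 - i) - 1) / real N = real i / real N"
        using i assms(1) by (auto simp: field_simps of_nat_diff)
      then show "a (N + 1 - i) = (real i)^k / (real N)^k" by (simp add: a_def power_divide)
    qed simp
    finally show ?thesis by (simp add: sum_divide_distrib)
  qed
  have S4: "(\<Sum>i=1..N. (real i)^k) / (real N)^k \<le> real N / (real k + 1) + 1"
  proof -
    have NK: "(real N)^k > 0" using assms(1) by simp
    have "(\<Sum>i=1..N. (real i)^k) \<le> (real N)^(k+1) / (real k + 1) + (real N)^k"
      using sum_pow_bound2 assms(2) by blast
    also have "\<dots> = (real N / (real k + 1) + 1) * (real N)^k"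
      by (simp add: field_simps)
    finally show ?thesis using NK by (simp add: divide_le_eq)
  qed
  have S: "(\<Sum>i=1..N. real i * v i) \<le> real N / (real k + 1) + 1" using S2 S3 S4 by simp
  have fin: "1 + real k / real (N+1) * (real N / (real k + 1) + 1) \<le> 3"
  proof -
    have h1: "real k / real (N+1) \<le> 1" using assms(3) by simp
    have h0: "real N * real k \<le> (real N+1)*(real k+1)" by (simp add: algebra_simps)
    have h2: "real k / real (N+1) * (real N / (real k + 1)) \<le> 1"
    proof -
      have "real k / real (N+1) * (real N / (real k + 1)) = (real N * real k) / ((real N+1)*(real k+1))"
        by (simp add: field_simps)
      also have "\<dots> \<le> 1" using h0 by (subst divide_le_eq_1) auto
      finally show ?thesis .
    qed
    have "real k / real (N+1) * (real N / (real k + 1) + 1)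
        = real k / real (N+1) * (real N / (real k + 1)) + real k / real (N+1)"
      by (simp add: algebra_simps)
    then show ?thesis using h1 h2 by linarith
  qed
  have e: "3 \<le> 2 * exp (1::real)" using exp_ge_add_one_self[of 1] by simp
  have "(\<Sum>i=1..N. v i * (real i / real (N + 1)) powr p)
        \<le> (\<Sum>i=1..N. v i * (c * (1 + real k * (real i / real (N+1)))))"
    by (intro sum_mono mult_left_mono point vnn)
  also have "\<dots> = c * ((\<Sum>i=1..N. v i) + real k / real (N+1) * (\<Sum>i=1..N. real i * v i))"
    by (simp add: sum_distrib_left sum.distrib algebra_simps)
  also have "\<dots> \<le> c * (1 + real k / real (N+1) * (real N / (real k + 1) + 1))"
    using S S1 c by (intro mult_left_mono add_mono) (auto intro: mult_left_mono)
  also have "\<dots> \<le> c * 3" using fin c by simp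
  also have "\<dots> \<le> c * (2 * exp 1)" using e c by simp
  finally show ?thesis by (simp add: p_def c_def algebra_simps)
qed

end
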